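(* Let $\Omega=A_1\cup\dots\cup A_n$ be a disjoint union of $n$ nonempty sets, let $\mathcal B$ be the $\sigma$-algebra generated by $\{A_1,\dots,A_n\}$, and let $\mu$ be the positive measure on $(\Omega,\mathcal B)$ with $\mu(A_i)=a_i>0$ for $i=1,\dots,n$. Let $\mathcal R=\{v\in\{-1,0,1\}^n:\sum_{i=1}^n v_ia_i=0\}$. Then condition $(\mathcal L)$ uniquely determines $\mu$ (that is, every signed measure $\nu$ on $(\Omega,\mathcal B)$ satisfying $(\mathcal L)$ with respect to $\mu$ is of the form $\nu=\alpha\mu$ for some $\alpha\in\mathbb R$) if and only if the linear span of $\mathcal R$ in $\mathbb R^n$ has dimension $n-1$.
   Context: A signed measure $\nu$ satisfies condition $(\mathcal L)$ with respect to $\mu$ if for all $A,B\in\mathcal B$ with $\mu(A)=\mu(B)\neq\pm\infty$ one has $\nu(A)=\nu(B)\neq\pm\infty$. *)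

theory Defs
  imports "HOL-Probability.Probability"
begin

definition signed_measure :: "'a measure \<Rightarrow> ('a set \<Rightarrow> real) \<Rightarrow> bool" where
  "signed_measure M \<nu> \<longleftrightarrow> \<nu> {} = 0 \<and>
     (\<forall>F :: nat \<Rightarrow> 'a set. range F \<subseteq> sets M \<longrightarrow> disjoint_family F \<longrightarrow>
        (\<lambda>i. \<nu> (F i)) sums \<nu> (\<Union>i. F i))"

text \<open>Condition (L): for all A, B in sets M with mu(A) = mu(B) finite, nu(A) = nu(B)
  (finiteness of nu(A), nu(B) is automatic for real-valued nu).\<close>
definition condition_L :: "'a measure \<Rightarrow> ('a set \<Rightarrow> real) \<Rightarrow> bool" where
  "condition_L \<mu> \<nu> \<longleftrightarrow> (\<forall>A\<in>sets \<mu>. \<forall>B\<in>sets \<mu>.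
      emeasure \<mu> A = emeasure \<mu> B \<and> emeasure \<mu> A \<noteq> \<infinity> \<longrightarrow> \<nu> A = \<nu> B)"

end

theory Submission
  imports Defs
begin

lemma sets_char:
  fixes A :: "'n::finite \<Rightarrow> 'a set"
  assumes O: "\<Omega> = (\<Union>i. A i)" and d: "disjoint_family A"
  shows "sigma_sets \<Omega> (range A) = {X. X \<subseteq> \<Omega> \<and> (\<forall>i. A i \<subseteq> X \<or> A i \<inter> X = {})}"
proof
  show "sigma_sets \<Omega> (range A) \<subseteq> {X. X \<subseteq> \<Omega> \<and> (\<forall>i. A i \<subseteq> X \<or> A i \<inter> X = {})}"
  proof
    fix X assume "X \<in> sigma_sets \<Omega> (range A)"
    then show "X \<in> {X. X \<subseteq> \<Omega> \<and> (\<forall>i. A i \<subseteq> X \<or> A i \<inter> X = {})}"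
    proof induct
      case (Basic a)
      then obtain j where j: "a = A j" by auto
      have "A i \<subseteq> a \<or> A i \<inter> a = {}" for i
        using d j unfolding disjoint_family_on_def by (cases "i = j") auto
      moreover have "a \<subseteq> \<Omega>" using O j by auto
      ultimately show ?case by simp
    next
      case Empty
      then show ?case by simp
    next
      case (Compl a)
      then have h: "\<And>i. A i \<subseteq> a \<or> A i \<inter> a = {}" by simp
      have "A i \<subseteq> \<Omega> - a \<or> A i \<inter> (\<Omega> - a) = {}" for i
      proof -
        have "A i \<subseteq> \<Omega>" using O by auto
        then show ?thesis using h[of i] by auto
      qed
      then show ?case by simp
    next
      case (Union F)
      then have h: "\<And>k i. A i \<subseteq> F k \<or> A i \<inter> F k = {}" and s: "\<And>k. F k \<subseteq> \<Omega>" by simp_all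
      have "A i \<subseteq> (\<Union>k. F k) \<or> A i \<inter> (\<Union>k. F k) = {}" for i
      proof (cases "\<exists>k. A i \<subseteq> F k")
        case True
        then show ?thesis by auto
      next
        case False
        then have "\<And>k. A i \<inter> F k = {}" using h by metis
        then show ?thesis by auto
      qed
      moreover have "(\<Union>k. F k) \<subseteq> \<Omega>" using s by auto
      ultimately show ?case by simp
    qed
  qed
next
  show "{X. X \<subseteq> \<Omega> \<and> (\<forall>i. A i \<subseteq> X \<or> A i \<inter> X = {})} \<subseteq> sigma_sets \<Omega> (range A)"
  proof
    fix X assume X: "X \<in> {X. X \<subseteq> \<Omega> \<and> (\<forall>i. A i \<subseteq> X \<or> A i \<inter> X = {})}"
    have eq: "X = (\<Union>i\<in>{i. A i \<subseteq> X}. A i)"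
    proof
      show "X \<subseteq> (\<Union>i\<in>{i. A i \<subseteq> X}. A i)"
      proof
        fix z assume z: "z \<in> X"
        then obtain i where i: "z \<in> A i" using X O by auto
        then have "A i \<subseteq> X" using X z by auto
        then show "z \<in> (\<Union>i\<in>{i. A i \<subseteq> X}. A i)" using i by auto
      qed
    qed auto
    have "range A \<subseteq> Pow \<Omega>" using O by auto
    then interpret sa: sigma_algebra \<Omega> "sigma_sets \<Omega> (range A)" by (rule sigma_algebra_sigma_sets)
    have "(\<Union>i\<in>{i. A i \<subseteq> X}. A i) \<in> sigma_sets \<Omega> (range A)"
      by (rule sa.finite_UN) auto
    then show "X \<in> sigma_sets \<Omega> (range A)" using eq by simp
  qed
qed

lemma nu_add:
  assumes s: "signed_measure M \<nu>" and X: "X \<in> sets M" and Y: "Y \<in> sets M" and XY: "X \<inter> Y = {}"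
  shows "\<nu> (X \<union> Y) = \<nu> X + \<nu> Y"
proof -
  define F where "F = (\<lambda>k::nat. if k = 0 then X else if k = 1 then Y else {})"
  have r: "range F \<subseteq> sets M" using X Y by (auto simp: F_def)
  have d: "disjoint_family F" using XY unfolding disjoint_family_on_def F_def by auto
  have U: "(\<Union>i. F i) = X \<union> Y" unfolding F_def by (auto split: if_splits)
  have "(\<lambda>i. \<nu> (F i)) sums \<nu> (X \<union> Y)" using s r d U unfolding signed_measure_def by metis
  moreover have "(\<lambda>i. \<nu> (F i)) = (\<lambda>i. if i \<in> {0,1} then \<nu> (F i) else 0)"
    using s unfolding signed_measure_def F_def by auto
  moreover have "(\<lambda>i. if i \<in> {0::nat,1} then \<nu> (F i) else 0) sums (\<Sum>i\<in>{0,1}. \<nu> (F i))"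
    by (rule sums_If_finite_set) simp
  ultimately have "\<nu> (X \<union> Y) = (\<Sum>i\<in>{0::nat,1}. \<nu> (F i))" using sums_unique2 by metis
  then show ?thesis by (simp add: F_def)
qed

lemma nu_fin:
  assumes s: "signed_measure M \<nu>" and T: "finite T"
  shows "(\<forall>i\<in>T. B i \<in> sets M) \<Longrightarrow> disjoint_family_on B T \<Longrightarrow> \<nu> (\<Union>i\<in>T. B i) = (\<Sum>i\<in>T. \<nu> (B i))"
  using T
proof (induction T rule: finite_induct)
  case empty
  then show ?case using s unfolding signed_measure_def by simp
next
  case (insert x F)
  have "(\<Union>i\<in>F. B i) \<in> sets M" using insert.prems insert.hyps by auto
  moreover have "B x \<inter> (\<Union>i\<in>F. B i) = {}"
    using insert.prems(2) insert.hyps unfolding disjoint_family_on_def by auto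
  moreover have "disjoint_family_on B F" using insert.prems(2) unfolding disjoint_family_on_def by auto
  ultimately show ?case using insert nu_add[OF s, of "B x" "\<Union>i\<in>F. B i"] by simp
qed


lemma sum_pm:
  fixes x :: "real^'n::finite"
  assumes "\<forall>i. x $ i \<in> {-1, 0, 1}"
  shows "(\<Sum>i\<in>UNIV. x $ i * f i) = (\<Sum>i\<in>{i. x $ i = 1}. f i) - (\<Sum>i\<in>{i. x $ i = -1}. f i)"
proof -
  have "(\<Sum>i\<in>UNIV. x $ i * f i) = (\<Sum>i\<in>UNIV. (if x $ i = 1 then f i else 0) - (if x $ i = -1 then f i else 0))"
    using assms by (intro sum.cong) auto
  also have "\<dots> = (\<Sum>i\<in>UNIV. (if x $ i = 1 then f i else 0)) - (\<Sum>i\<in>UNIV. (if x $ i = -1 then f i else 0))"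
    by (rule sum_subtractf)
  also have "\<dots> = (\<Sum>i\<in>{i. x $ i = 1}. f i) - (\<Sum>i\<in>{i. x $ i = -1}. f i)"
    by (simp add: sum.If_cases)
  finally show ?thesis .
qed

theorem proposition4p1:
  fixes \<Omega> :: "'a set" and A :: "'n::finite \<Rightarrow> 'a set" and a :: "'n \<Rightarrow> real"
    and \<mu> :: "'a measure"
  assumes "\<Omega> = (\<Union>i. A i)"
    and "disjoint_family A"
    and "\<And>i. A i \<noteq> {}"
    and "space \<mu> = \<Omega>"
    and "sets \<mu> = sigma_sets \<Omega> (range A)"
    and "\<And>i. emeasure \<mu> (A i) = ennreal (a i)"
    and "\<And>i. a i > 0"
  shows "(\<forall>\<nu>. signed_measure \<mu> \<nu> \<and> condition_L \<mu> \<nu> \<longrightarrow>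
            (\<exists>\<alpha>::real. \<forall>X\<in>sets \<mu>. \<nu> X = \<alpha> * measure \<mu> X))
     \<longleftrightarrow> dim (span {v :: real^'n. (\<forall>i. v $ i \<in> {-1, 0, 1}) \<and> (\<Sum>i\<in>UNIV. v $ i * a i) = 0})
          = CARD('n) - 1"
proof -
  have setsM: "sets \<mu> = {X. X \<subseteq> \<Omega> \<and> (\<forall>i. A i \<subseteq> X \<or> A i \<inter> X = {})}"
    unfolding assms(5) by (rule sets_char[OF assms(1,2)])
  have Ain: "A i \<in> sets \<mu>" for i unfolding assms(5) by (rule sigma_sets.Basic) simp
  have Ueq: "X = (\<Union>i\<in>{i. A i \<subseteq> X}. A i)" if "X \<in> sets \<mu>" for X
  proof
    show "X \<subseteq> (\<Union>i\<in>{i. A i \<subseteq> X}. A i)"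
    proof
      fix z assume z: "z \<in> X"
      have X: "X \<subseteq> \<Omega>" "\<And>i. A i \<subseteq> X \<or> A i \<inter> X = {}" using that setsM by auto
      obtain i where i: "z \<in> A i" using X(1) z assms(1) by auto
      then have "A i \<subseteq> X" using X(2)[of i] z by auto
      then show "z \<in> (\<Union>i\<in>{i. A i \<subseteq> X}. A i)" using i by auto
    qed
  qed auto
  have SU: "{i. A i \<subseteq> (\<Union>j\<in>P. A j)} = P" for P
  proof
    show "{i. A i \<subseteq> (\<Union>j\<in>P. A j)} \<subseteq> P"
    proof
      fix i assume "i \<in> {i. A i \<subseteq> (\<Union>j\<in>P. A j)}"
      moreover obtain z where "z \<in> A i" using assms(3) by blast
      ultimately obtain j where "j \<in> P" "z \<in> A j" by blast
      show "i \<in> P"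
      proof (rule ccontr)
        assume "i \<notin> P"
        then have "i \<noteq> j" using \<open>j \<in> P\<close> by auto
        then have "A i \<inter> A j = {}" using assms(2) unfolding disjoint_family_on_def by auto
        then show False using \<open>z \<in> A i\<close> \<open>z \<in> A j\<close> by auto
      qed
    qed
  qed auto
  have SA: "{i. A i \<subseteq> A j} = {j}" for j using SU[of "{j}"] by simp
  have dA: "disjoint_family_on A I" for I using assms(2) unfolding disjoint_family_on_def by auto
  have em: "emeasure \<mu> X = ennreal (\<Sum>i\<in>{i. A i \<subseteq> X}. a i)" if "X \<in> sets \<mu>" for X
  proof -
    have "emeasure \<mu> X = emeasure \<mu> (\<Union>i\<in>{i. A i \<subseteq> X}. A i)" using Ueq[OF that] by simp
    also have "\<dots> = (\<Sum>i\<in>{i. A i \<subseteq> X}. emeasure \<mu> (A i))"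
      using sum_emeasure[of A "{i. A i \<subseteq> X}" \<mu>] Ain dA by (metis finite image_subset_iff)
    also have "\<dots> = ennreal (\<Sum>i\<in>{i. A i \<subseteq> X}. a i)" using assms(6,7) by (simp add: less_imp_le)
    finally show ?thesis .
  qed
  have me: "measure \<mu> X = (\<Sum>i\<in>{i. A i \<subseteq> X}. a i)" if "X \<in> sets \<mu>" for X
    using em[OF that] assms(7) by (simp add: measure_def sum_nonneg less_imp_le)
  have nus: "\<nu> X = (\<Sum>i\<in>{i. A i \<subseteq> X}. \<nu> (A i))" if "signed_measure \<mu> \<nu>" "X \<in> sets \<mu>" for \<nu> X
    using nu_fin[OF that(1), of "{i. A i \<subseteq> X}" A] Ain dA Ueq[OF that(2)] by auto
  define av :: "real^'n" where "av = (\<chi> i. a i)"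
  define R where "R = {v :: real^'n. (\<forall>i. v $ i \<in> {-1, 0, 1}) \<and> (\<Sum>i\<in>UNIV. v $ i * a i) = 0}"
  define W where "W = {y. \<forall>x\<in>span R. orthogonal x y}"
  have dimW: "dim W + dim (span R) = CARD('n)"
    using dim_subspace_orthogonal_to_vectors[of "span R" UNIV] unfolding W_def by (simp add: dim_UNIV)
  have Wc: "y \<in> W \<longleftrightarrow> (\<forall>x\<in>R. (\<Sum>i\<in>UNIV. x $ i * y $ i) = 0)" for y
  proof -
    have "y \<in> W \<longleftrightarrow> (\<forall>x\<in>R. orthogonal x y)"
    proof
      assume "y \<in> W" then show "\<forall>x\<in>R. orthogonal x y" unfolding W_def by (simp add: span_base)
    next
      assume h: "\<forall>x\<in>R. orthogonal x y"
      have "orthogonal x y" if "x \<in> span R" for x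
      proof -
        have "orthogonal y x" using orthogonal_to_span[OF that, of y] h orthogonal_commute by metis
        then show ?thesis using orthogonal_commute by metis
      qed
      then show "y \<in> W" unfolding W_def by simp
    qed
    then show ?thesis by (simp add: orthogonal_def inner_vec_def)
  qed
  have avW: "av \<in> W" unfolding Wc R_def av_def by simp
  have av0: "av \<noteq> 0"
  proof
    assume "av = 0"
    then have "av $ undefined = 0" by simp
    then show False using assms(7)[of undefined] by (simp add: av_def)
  qed
  have subW: "subspace W" unfolding W_def by (rule subspace_orthogonal_to_vectors)
  have spav: "span {av} \<subseteq> W" using span_minimal[of "{av}" W] avW subW by simp
  have d1: "dim (span {av}) = 1" using av0 by simp
  have W1: "1 \<le> dim W" using dim_subset[OF spav] d1 by simp
  have cpos: "CARD('n) \<ge> 1" by (simp add: Suc_le_eq)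
  have key2: "W \<subseteq> span {av} \<longleftrightarrow> dim (span R) = CARD('n) - 1"
  proof
    assume "W \<subseteq> span {av}"
    then have "dim W \<le> 1" using dim_subset d1 by metis
    then show "dim (span R) = CARD('n) - 1" using W1 dimW by simp
  next
    assume "dim (span R) = CARD('n) - 1"
    then have "dim W = 1" using dimW cpos by linarith
    then have "span {av} = W" using subspace_dim_equal[OF subspace_span subW spav] d1 by simp
    then show "W \<subseteq> span {av}" by simp
  qed
  have key1: "(\<forall>\<nu>. signed_measure \<mu> \<nu> \<and> condition_L \<mu> \<nu> \<longrightarrow>
            (\<exists>\<alpha>::real. \<forall>X\<in>sets \<mu>. \<nu> X = \<alpha> * measure \<mu> X)) \<longleftrightarrow> W \<subseteq> span {av}"
  proof
    assume H: "W \<subseteq> span {av}"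
    show "\<forall>\<nu>. signed_measure \<mu> \<nu> \<and> condition_L \<mu> \<nu> \<longrightarrow>
            (\<exists>\<alpha>::real. \<forall>X\<in>sets \<mu>. \<nu> X = \<alpha> * measure \<mu> X)"
    proof (intro allI impI)
      fix \<nu> assume nu: "signed_measure \<mu> \<nu> \<and> condition_L \<mu> \<nu>"
      define b :: "real^'n" where "b = (\<chi> i. \<nu> (A i))"
      have "b \<in> W" unfolding Wc
      proof
        fix x assume xR: "x \<in> R"
        define P where "P = {i. x $ i = 1}"
        define N where "N = {i. x $ i = -1}"
        have pm: "\<forall>i. x $ i \<in> {-1, 0, 1}" using xR R_def by simp
        have XP: "(\<Union>j\<in>P. A j) \<in> sets \<mu>" using Ain by auto
        have XN: "(\<Union>j\<in>N. A j) \<in> sets \<mu>" using Ain by auto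
        have "(\<Sum>i\<in>P. a i) - (\<Sum>i\<in>N. a i) = 0"
          using xR sum_pm[OF pm, of a] unfolding R_def P_def N_def by simp
        then have "emeasure \<mu> (\<Union>j\<in>P. A j) = emeasure \<mu> (\<Union>j\<in>N. A j)"
          using em[OF XP] em[OF XN] SU by simp
        moreover have "emeasure \<mu> (\<Union>j\<in>P. A j) \<noteq> \<infinity>" using em[OF XP] by simp
        ultimately have "\<nu> (\<Union>j\<in>P. A j) = \<nu> (\<Union>j\<in>N. A j)"
          using nu XP XN unfolding condition_L_def by blast
        then have "(\<Sum>i\<in>P. \<nu> (A i)) = (\<Sum>i\<in>N. \<nu> (A i))"
          using nus[of \<nu>, OF _ XP] nus[of \<nu>, OF _ XN] nu SU by simp
        then show "(\<Sum>i\<in>UNIV. x $ i * b $ i) = 0"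
          using sum_pm[OF pm, of "\<lambda>i. b $ i"] unfolding P_def N_def b_def by simp
      qed
      with H obtain k where bk: "b = k *\<^sub>R av" using real_vector.span_singleton by blast
      have "\<forall>X\<in>sets \<mu>. \<nu> X = k * measure \<mu> X"
      proof
        fix X assume X: "X \<in> sets \<mu>"
        have "\<nu> X = (\<Sum>i\<in>{i. A i \<subseteq> X}. b $ i)" using nus[of \<nu> X] nu X by (simp add: b_def)
        also have "\<dots> = (\<Sum>i\<in>{i. A i \<subseteq> X}. k * a i)" by (simp add: bk av_def)
        also have "\<dots> = k * measure \<mu> X" using me[OF X] by (simp add: sum_distrib_left)
        finally show "\<nu> X = k * measure \<mu> X" .
      qed
      then show "\<exists>\<alpha>::real. \<forall>X\<in>sets \<mu>. \<nu> X = \<alpha> * measure \<mu> X" by blast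
    qed
  next
    assume H: "\<forall>\<nu>. signed_measure \<mu> \<nu> \<and> condition_L \<mu> \<nu> \<longrightarrow>
            (\<exists>\<alpha>::real. \<forall>X\<in>sets \<mu>. \<nu> X = \<alpha> * measure \<mu> X)"
    show "W \<subseteq> span {av}"
    proof
      fix b assume bW: "b \<in> W"
      define \<nu> where "\<nu> X = (\<Sum>i\<in>{i. A i \<subseteq> X}. b $ i)" for X
      have nu2: "\<nu> X = (\<Sum>i\<in>UNIV. if A i \<subseteq> X then b $ i else 0)" for X
        unfolding \<nu>_def by (simp add: sum.If_cases)
      have sm: "signed_measure \<mu> \<nu>"
        unfolding signed_measure_def
      proof (intro conjI allI impI)
        show "\<nu> {} = 0" unfolding \<nu>_def using assms(3) by simp
      next
        fix F :: "nat \<Rightarrow> 'a set" assume r: "range F \<subseteq> sets \<mu>" and d: "disjoint_family F"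
        have "(\<lambda>k. if A i \<subseteq> F k then b $ i else 0) sums (if A i \<subseteq> (\<Union>k. F k) then b $ i else 0)" for i
        proof (cases "\<exists>k0. A i \<subseteq> F k0")
          case True
          then obtain k0 where k0: "A i \<subseteq> F k0" by blast
          have "A i \<subseteq> F k \<longleftrightarrow> k = k0" for k
            using k0 d assms(3)[of i] unfolding disjoint_family_on_def by blast
          then have "(\<lambda>k. if A i \<subseteq> F k then b $ i else 0) = (\<lambda>k. if k = k0 then b $ i else 0)" by auto
          moreover have "A i \<subseteq> (\<Union>k. F k)" using k0 by blast
          ultimately show ?thesis using sums_single[of k0 "\<lambda>_. b $ i"] by simp
        next
          case False
          have "\<not> A i \<subseteq> (\<Union>k. F k)"
          proof
            assume "A i \<subseteq> (\<Union>k. F k)"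
            moreover obtain z where z: "z \<in> A i" using assms(3) by blast
            ultimately obtain k where "z \<in> F k" by blast
            moreover have "A i \<subseteq> F k \<or> A i \<inter> F k = {}" using r setsM by blast
            ultimately show False using False z by blast
          qed
          then show ?thesis using False by simp
        qed
        then have "(\<lambda>k. \<Sum>i\<in>UNIV. if A i \<subseteq> F k then b $ i else 0) sums
                   (\<Sum>i\<in>UNIV. if A i \<subseteq> (\<Union>k. F k) then b $ i else 0)"
          by (intro sums_sum)
        then show "(\<lambda>k. \<nu> (F k)) sums \<nu> (\<Union>k. F k)" unfolding nu2 .
      qed
      have cl: "condition_L \<mu> \<nu>"
        unfolding condition_L_def
      proof (intro ballI impI)
        fix X Y assume X: "X \<in> sets \<mu>" and Y: "Y \<in> sets \<mu>"
          and e: "emeasure \<mu> X = emeasure \<mu> Y \<and> emeasure \<mu> X \<noteq> \<infinity>"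
        have ea: "(\<Sum>i\<in>{i. A i \<subseteq> X}. a i) = (\<Sum>i\<in>{i. A i \<subseteq> Y}. a i)"
          using e em[OF X] em[OF Y] assms(7) by (simp add: sum_nonneg less_imp_le)
        define x :: "real^'n" where "x = (\<chi> i. (if A i \<subseteq> X then 1 else 0) - (if A i \<subseteq> Y then 1 else 0))"
        have sx: "(\<Sum>i\<in>UNIV. x $ i * f i) = (\<Sum>i\<in>{i. A i \<subseteq> X}. f i) - (\<Sum>i\<in>{i. A i \<subseteq> Y}. f i)" for f
        proof -
          have "(\<Sum>i\<in>UNIV. x $ i * f i) = (\<Sum>i\<in>UNIV. (if A i \<subseteq> X then f i else 0) - (if A i \<subseteq> Y then f i else 0))"
            unfolding x_def by (intro sum.cong) auto
          also have "\<dots> = (\<Sum>i\<in>{i. A i \<subseteq> X}. f i) - (\<Sum>i\<in>{i. A i \<subseteq> Y}. f i)"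
            by (simp add: sum_subtractf sum.If_cases)
          finally show ?thesis .
        qed
        have "x \<in> R" unfolding R_def using sx[of a] ea by (auto simp: x_def)
        then have "(\<Sum>i\<in>UNIV. x $ i * b $ i) = 0" using bW Wc by blast
        then show "\<nu> X = \<nu> Y" using sx[of "\<lambda>i. b $ i"] unfolding \<nu>_def by simp
      qed
      obtain \<alpha> where al: "\<forall>X\<in>sets \<mu>. \<nu> X = \<alpha> * measure \<mu> X" using H sm cl by blast
      have "b $ i = \<alpha> * a i" for i
      proof -
        have "\<nu> (A i) = \<alpha> * measure \<mu> (A i)" using al Ain[of i] by blast
        then show ?thesis using me[OF Ain[of i]] SA[of i] unfolding \<nu>_def by simp
      qed
      then have "b = \<alpha> *\<^sub>R av" by (simp add: vec_eq_iff av_def)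
      then show "b \<in> span {av}" by (simp add: span_base span_mul)
    qed
  qed
  show ?thesis using key1 key2 unfolding R_def by simp
qed

end
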